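(* Let $u$ and $v$ be vertices of $G$ such that $u$ is neither an ancestor nor a descendant of $v$. Suppose the set $X$ of Case 3 of the routing algorithm (the vertices of $C_{T^u}$ that are ancestors of $v$ and not ancestors of $u$) is non-empty. Then the vertices visited when executing the routing steps of Case 3 b) lie on the path in $T$ from $lca(u,v)$ to $v$, and they are visited in the order in which they appear on this path.
   Context: Let $T$ be a rooted tree on $n$ vertices with positive edge weights; $P(a,b)$ is the path in $T$ from $a$ to $b$ and $\delta_T(a,b)$ its weight; $lca(a,b)$ is the lowest common ancestor. Ancestor/descendant refer to $T$, and a vertex counts as its own ancestor and descendant; "deepest"/"highest" refer to depth in $T$. $T_v$ is the subtree of $T$ rooted at $v$. For every non-leaf vertex $v$ fix a child $c_1(v)$ with $|T_{c_1(v)}|$ maximal; edges $(v,c_1(v))$ are leftmost. A subtree $R$ of $T$ is rooted at its vertex closest to the root, $rt(R)$, and inherits the leftmost labelling; $R_v$ is the subtree of $R$ rooted at $v$. $P_R(v)$ is the longest downward path from $v$ in $R$ using only leftmost edges, with last vertex $l(v)$; $l(R):=l(rt(R))$. A vertex $v$ of $R$ is $d$-balanced if $|R_{c_1(v)}|\le |R|-d$ (with $|R_{c_1(v)}|=0$ if $c_1(v)$ is undefined or not in $R$); $b_d(v)$ is the first $d$-balanced vertex on $P_R(v)$, or NULL. $CV(R,d)=\emptyset$ if $b_d(rt(R))$ is NULL, else $\{b\}\cup\bigcup_w CV(R_w,d)$ with $b=b_d(rt(R))$ and $w$ ranging over children of $b$ in $R$. Fix an integer $k\ge4$; for a subtree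 $R$ with $m$ vertices, $C_R=V(R)$ if $k\ge m/2-1$, else $C_R=CV(R,m/k)\cup\{l(R),rt(R)\}$. Canonical subtrees: $T$ is canonical; if $R$ is canonical, each component of $R$ minus $C_R$ is canonical. Each vertex $v$ lies in $C_R$ for exactly one canonical $R$, denoted $T^v$. The spanner $G$ has vertex set $V(T)$ and edges: all edges of $T$, and all pairs of distinct vertices of $C_R$ for every canonical $R$; edge $(a,b)$ has weight $\delta_T(a,b)$. Routing algorithm from current vertex $u$ to destination $v$: Case 0: if $v$ is adjacent to $u$, move to $v$. Case 1: $u$ is an ancestor of $v$; let $X$ be the vertices of $C_{T^u}$ that are ancestors of $v$, $x$ the deepest; move to $x$, then to the child of $x$ that is an ancestor of $v$. Case 2: $u$ is a descendant of $v$; let $X$ be the vertices of $C_{T^u}$ that are descendants of $v$ and ancestors of $u$, $x$ the highest; move to $x$, then to the parent of $x$. Case 3: $u$ is neither; let $X$ be the vertices of $C_{T^u}$ that are ancestors of $v$ but not of $u$, and $Y$ those that are ancestors of $u$ but not of $v$, $y$ the highest vertex of $Y$. Case 3 a): $X=\emptyset$: move to $y$, then to the parent of $y$. Case 3 b): $X\neq\emptyset$: with $x$ the deepest vertex of $X$ and $x'$ the child of $x$ that is an ancestor of $v$, move to $x$, then to $x'$. (Moving to the current vertex means staying.) *)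

theory Defs
  imports Complex_Main
begin

text \<open>A rooted tree on the finite vertex set V with root r is given by a parent
function par (with par r = r).  Edge weights are attached to the edge (v, par v).\<close>

definition anc :: "('a \<Rightarrow> 'a) \<Rightarrow> 'a \<Rightarrow> 'a \<Rightarrow> bool" where
  "anc par a v \<longleftrightarrow> (\<exists>n. (par ^^ n) v = a)"

definition is_tree :: "'a set \<Rightarrow> 'a \<Rightarrow> ('a \<Rightarrow> 'a) \<Rightarrow> bool" where
  "is_tree V r par \<longleftrightarrow> finite V \<and> r \<in> V \<and> par r = r \<and>
     (\<forall>v\<in>V - {r}. par v \<in> V) \<and> (\<forall>v\<in>V. \<exists>n. (par ^^ n) v = r)"

definition child :: "'a set \<Rightarrow> 'a \<Rightarrow> ('a \<Rightarrow> 'a) \<Rightarrow> 'a \<Rightarrow> 'a \<Rightarrow> bool" where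
  "child V r par c x \<longleftrightarrow> c \<in> V \<and> c \<noteq> r \<and> par c = x"

definition subT :: "'a set \<Rightarrow> ('a \<Rightarrow> 'a) \<Rightarrow> 'a \<Rightarrow> 'a set" where
  "subT V par x = {s \<in> V. anc par x s}"

definition leftmost_ok :: "'a set \<Rightarrow> 'a \<Rightarrow> ('a \<Rightarrow> 'a) \<Rightarrow> ('a \<Rightarrow> 'a) \<Rightarrow> bool" where
  "leftmost_ok V r par c1 \<longleftrightarrow> (\<forall>x\<in>V. (\<exists>c. child V r par c x) \<longrightarrow>
      child V r par (c1 x) x \<and>
      (\<forall>c. child V r par c x \<longrightarrow> card (subT V par c) \<le> card (subT V par (c1 x))))"

definition is_subtree :: "'a set \<Rightarrow> ('a \<Rightarrow> 'a) \<Rightarrow> 'a set \<Rightarrow> bool" where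
  "is_subtree V par S \<longleftrightarrow> S \<subseteq> V \<and>
     (\<exists>t\<in>S. \<forall>s\<in>S. anc par t s \<and> (\<forall>w. anc par t w \<and> anc par w s \<longrightarrow> w \<in> S))"

definition rt :: "('a \<Rightarrow> 'a) \<Rightarrow> 'a set \<Rightarrow> 'a" where
  "rt par S = (THE t. t \<in> S \<and> (\<forall>s\<in>S. anc par t s))"

definition subR :: "('a \<Rightarrow> 'a) \<Rightarrow> 'a set \<Rightarrow> 'a \<Rightarrow> 'a set" where
  "subR par S x = {s \<in> S. anc par x s}"

definition has_lchild :: "'a set \<Rightarrow> 'a \<Rightarrow> ('a \<Rightarrow> 'a) \<Rightarrow> ('a \<Rightarrow> 'a) \<Rightarrow> 'a set \<Rightarrow> 'a \<Rightarrow> bool" where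
  "has_lchild V r par c1 S x \<longleftrightarrow> (\<exists>c. child V r par c x) \<and> c1 x \<in> S"

definition lpath :: "('a \<Rightarrow> 'a) \<Rightarrow> ('a \<Rightarrow> 'a) \<Rightarrow> 'a set \<Rightarrow> 'a \<Rightarrow> 'a set" where
  "lpath par c1 S x = {w \<in> S. anc par x w \<and>
      (\<forall>y. anc par x y \<and> anc par y w \<and> y \<noteq> x \<longrightarrow> y = c1 (par y))}"

definition lend :: "('a \<Rightarrow> 'a) \<Rightarrow> ('a \<Rightarrow> 'a) \<Rightarrow> 'a set \<Rightarrow> 'a \<Rightarrow> 'a" where
  "lend par c1 S x = (THE w. w \<in> lpath par c1 S x \<and> (\<forall>y\<in>lpath par c1 S x. anc par y w))"

definition lsize :: "'a set \<Rightarrow> 'a \<Rightarrow> ('a \<Rightarrow> 'a) \<Rightarrow> ('a \<Rightarrow> 'a) \<Rightarrow> 'a set \<Rightarrow> 'a \<Rightarrow> nat" where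
  "lsize V r par c1 S x = (if has_lchild V r par c1 S x then card (subR par S (c1 x)) else 0)"

definition balanced :: "'a set \<Rightarrow> 'a \<Rightarrow> ('a \<Rightarrow> 'a) \<Rightarrow> ('a \<Rightarrow> 'a) \<Rightarrow> 'a set \<Rightarrow> real \<Rightarrow> 'a \<Rightarrow> bool" where
  "balanced V r par c1 S d x \<longleftrightarrow> real (lsize V r par c1 S x) \<le> real (card S) - d"

text \<open>b_d(x): first d-balanced vertex on P_R(x), None = NULL\<close>
definition bd :: "'a set \<Rightarrow> 'a \<Rightarrow> ('a \<Rightarrow> 'a) \<Rightarrow> ('a \<Rightarrow> 'a) \<Rightarrow> 'a set \<Rightarrow> real \<Rightarrow> 'a \<Rightarrow> 'a option" where
  "bd V r par c1 S d x =
     (if \<exists>w\<in>lpath par c1 S x. balanced V r par c1 S d w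
      then Some (THE w. w \<in> lpath par c1 S x \<and> balanced V r par c1 S d w \<and>
                   (\<forall>y\<in>lpath par c1 S x. balanced V r par c1 S d y \<longrightarrow> anc par w y))
      else None)"

inductive in_cv :: "'a set \<Rightarrow> 'a \<Rightarrow> ('a \<Rightarrow> 'a) \<Rightarrow> ('a \<Rightarrow> 'a) \<Rightarrow> real \<Rightarrow> 'a set \<Rightarrow> 'a \<Rightarrow> bool"
  for V r par c1 d where
  cv_top: "bd V r par c1 S d (rt par S) = Some b \<Longrightarrow> in_cv V r par c1 d S b"
| cv_rec: "bd V r par c1 S d (rt par S) = Some b \<Longrightarrow> child V r par c b \<Longrightarrow> c \<in> S \<Longrightarrow>
           in_cv V r par c1 d (subR par S c) x \<Longrightarrow> in_cv V r par c1 d S x"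

definition CV :: "'a set \<Rightarrow> 'a \<Rightarrow> ('a \<Rightarrow> 'a) \<Rightarrow> ('a \<Rightarrow> 'a) \<Rightarrow> 'a set \<Rightarrow> real \<Rightarrow> 'a set" where
  "CV V r par c1 S d = {x. in_cv V r par c1 d S x}"

definition Cset :: "'a set \<Rightarrow> 'a \<Rightarrow> ('a \<Rightarrow> 'a) \<Rightarrow> ('a \<Rightarrow> 'a) \<Rightarrow> int \<Rightarrow> 'a set \<Rightarrow> 'a set" where
  "Cset V r par c1 k S =
     (let m = real (card S) in
      if real_of_int k \<ge> m / 2 - 1 then S
      else CV V r par c1 S (m / real_of_int k) \<union> {lend par c1 S (rt par S), rt par S})"

definition is_comp :: "'a set \<Rightarrow> ('a \<Rightarrow> 'a) \<Rightarrow> 'a set \<Rightarrow> 'a set \<Rightarrow> bool" where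
  "is_comp V par A S \<longleftrightarrow> S \<subseteq> A \<and> is_subtree V par S \<and>
     (\<forall>S'. S \<subseteq> S' \<and> S' \<subseteq> A \<and> is_subtree V par S' \<longrightarrow> S' = S)"

inductive canonical :: "'a set \<Rightarrow> 'a \<Rightarrow> ('a \<Rightarrow> 'a) \<Rightarrow> ('a \<Rightarrow> 'a) \<Rightarrow> int \<Rightarrow> 'a set \<Rightarrow> bool"
  for V r par c1 k where
  can_T: "canonical V r par c1 k V"
| can_comp: "canonical V r par c1 k R \<Longrightarrow> is_comp V par (R - Cset V r par c1 k R) Q \<Longrightarrow>
             canonical V r par c1 k Q"

definition Tsup :: "'a set \<Rightarrow> 'a \<Rightarrow> ('a \<Rightarrow> 'a) \<Rightarrow> ('a \<Rightarrow> 'a) \<Rightarrow> int \<Rightarrow> 'a \<Rightarrow> 'a set" where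
  "Tsup V r par c1 k u = (THE R. canonical V r par c1 k R \<and> u \<in> Cset V r par c1 k R)"

definition lca :: "('a \<Rightarrow> 'a) \<Rightarrow> 'a \<Rightarrow> 'a \<Rightarrow> 'a" where
  "lca par u v = (THE a. anc par a u \<and> anc par a v \<and> (\<forall>b. anc par b u \<and> anc par b v \<longrightarrow> anc par b a))"

text \<open>vertex set of the tree path P(a,b) when a is an ancestor of b\<close>
definition tpath :: "('a \<Rightarrow> 'a) \<Rightarrow> 'a \<Rightarrow> 'a \<Rightarrow> 'a set" where
  "tpath par a b = {w. anc par a w \<and> anc par w b}"

end

theory Submission
  imports Defs
begin

lemma anc_refl: "anc par a a"
  unfolding anc_def by (metis funpow_0)

lemma anc_trans: "anc par a b \<Longrightarrow> anc par b c \<Longrightarrow> anc par a c"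
  unfolding anc_def by (metis funpow_add comp_apply)

lemma anc_par: "anc par (par a) a"
  unfolding anc_def by (rule exI[of _ 1]) simp

lemma funpow_split:
  assumes "n \<le> (m::nat)" shows "(f ^^ m) x = (f ^^ (m - n)) ((f ^^ n) x)"
proof -
  have "(f ^^ m) x = (f ^^ ((m - n) + n)) x" using assms by simp
  then show ?thesis by (simp only: funpow_add comp_apply)
qed

lemma pow_r: "par r = r \<Longrightarrow> (par ^^ n) r = r"
  by (induction n) auto

lemma pow_V: "is_tree V r par \<Longrightarrow> v \<in> V \<Longrightarrow> (par ^^ n) v \<in> V"
proof (induction n)
  case 0 then show ?case by simp
next
  case (Suc n)
  then show ?case unfolding is_tree_def
    by (cases "(par ^^ n) v = r") auto
qed

lemma reach_r: "is_tree V r par \<Longrightarrow> v \<in> V \<Longrightarrow> \<exists>N. \<forall>m\<ge>N. (par ^^ m) v = r"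
proof -
  assume t: "is_tree V r par" and v: "v \<in> V"
  then obtain N where N: "(par ^^ N) v = r" unfolding is_tree_def by blast
  have "\<forall>m\<ge>N. (par ^^ m) v = r"
  proof (intro allI impI)
    fix m assume "m \<ge> N"
    then have "(par ^^ m) v = (par ^^ (m - N)) ((par ^^ N) v)"
      by (rule funpow_split)
    moreover have "par r = r" using t unfolding is_tree_def by simp
    ultimately show "(par ^^ m) v = r" using N pow_r by simp
  qed
  then show ?thesis by blast
qed

lemma anc_V: "is_tree V r par \<Longrightarrow> v \<in> V \<Longrightarrow> anc par a v \<Longrightarrow> a \<in> V"
proof -
  assume t: "is_tree V r par" and v: "v \<in> V" and a: "anc par a v"
  then obtain n where n: "(par ^^ n) v = a" unfolding anc_def by blast
  show "a \<in> V" unfolding n[symmetric] by (rule pow_V[OF t v])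
qed

lemma periodic:
  assumes "(f ^^ p) b = b" shows "(f ^^ (j * p)) b = b"
proof (induction j)
  case 0 then show ?case by simp
next
  case (Suc j)
  have "(f ^^ (Suc j * p)) b = (f ^^ p) ((f ^^ (j * p)) b)"
    by (simp add: funpow_add)
  then show ?case using Suc assms by simp
qed

lemma anc_antisym:
  assumes t: "is_tree V r par" and bV: "b \<in> V"
    and ab: "anc par a b" and ba: "anc par b a"
  shows "a = b"
proof -
  obtain m where m: "(par ^^ m) b = a" using ab unfolding anc_def by blast
  obtain n where n: "(par ^^ n) a = b" using ba unfolding anc_def by blast
  have cyc: "(par ^^ (n + m)) b = b" using m n by (simp add: funpow_add)
  show ?thesis
  proof (cases "n + m = 0")
    case True then show ?thesis using m by simp
  next
    case False
    obtain N where N: "\<forall>k\<ge>N. (par ^^ k) b = r" using reach_r[OF t bV] by blast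
    have "(par ^^ (N * (n + m))) b = b" using periodic[OF cyc] by blast
    moreover have "N * (n + m) \<ge> N" using False by (cases "n + m") auto
    ultimately have br: "b = r" using N by simp
    have "par r = r" using t unfolding is_tree_def by simp
    then have "a = r" using m br pow_r[of par r m] by simp
    then show ?thesis using br by simp
  qed
qed

lemma anc_chain:
  assumes "anc par a v" "anc par b v"
  shows "anc par a b \<or> anc par b a"
proof -
  obtain m where m: "(par ^^ m) v = a" using assms unfolding anc_def by blast
  obtain n where n: "(par ^^ n) v = b" using assms unfolding anc_def by blast
  show ?thesis
  proof (cases "m \<le> n")
    case True
    then have "(par ^^ (n - m)) a = b" using m n funpow_split[of m n par v]
      by simp
    then show ?thesis unfolding anc_def by blast
  next
    case False
    then have "(par ^^ (m - n)) b = a" using m n funpow_split[of n m par v]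
      by simp
    then show ?thesis unfolding anc_def by blast
  qed
qed

lemma deepest:
  assumes t: "is_tree V r par" and vV: "v \<in> V"
    and S: "S \<subseteq> {a. anc par a v}" and ne: "S \<noteq> {}"
  shows "\<exists>!y. y \<in> S \<and> (\<forall>z\<in>S. anc par z y)"
proof -
  obtain s where s: "s \<in> S" using ne by blast
  then obtain n where "(par ^^ n) v \<in> S" using S unfolding anc_def by blast
  define n0 where "n0 = (LEAST n. (par ^^ n) v \<in> S)"
  have y: "(par ^^ n0) v \<in> S" unfolding n0_def by (rule LeastI) fact
  have all: "\<forall>z\<in>S. anc par z ((par ^^ n0) v)"
  proof
    fix z assume z: "z \<in> S"
    then obtain m where m: "(par ^^ m) v = z" using S unfolding anc_def by blast
    have "n0 \<le> m" unfolding n0_def using z m by (metis Least_le)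
    then have "(par ^^ (m - n0)) ((par ^^ n0) v) = z" using m funpow_split[of n0 m par v]
      by simp
    then show "anc par z ((par ^^ n0) v)" unfolding anc_def by blast
  qed
  show ?thesis
  proof (rule ex1I[of _ "(par ^^ n0) v"])
    show "(par ^^ n0) v \<in> S \<and> (\<forall>z\<in>S. anc par z ((par ^^ n0) v))" using y all by blast
  next
    fix y' assume h: "y' \<in> S \<and> (\<forall>z\<in>S. anc par z y')"
    have "y' \<in> V" using h S anc_V[OF t vV] by blast
    then show "y' = (par ^^ n0) v" using anc_antisym[OF t] h y all by blast
  qed
qed

theorem lemma11:
  fixes V :: "'a set" and r :: 'a and par c1 :: "'a \<Rightarrow> 'a" and wt :: "'a \<Rightarrow> real"
    and k :: int and u v :: 'a
  assumes tree: "is_tree V r par"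
    and weights: "\<forall>y\<in>V - {r}. wt y > 0"
    and lm: "leftmost_ok V r par c1"
    and k4: "k \<ge> 4"
    and uV: "u \<in> V" and vV: "v \<in> V"
    and nanc1: "\<not> anc par u v" and nanc2: "\<not> anc par v u"
  defines "X \<equiv> {y \<in> Cset V r par c1 k (Tsup V r par c1 k u). anc par y v \<and> \<not> anc par y u}"
  assumes Xne: "X \<noteq> {}"
  defines "x \<equiv> THE y. y \<in> X \<and> (\<forall>z\<in>X. anc par z y)"
    and "x' \<equiv> THE c. child V r par c (THE y. y \<in> X \<and> (\<forall>z\<in>X. anc par z y)) \<and> anc par c v"
  shows "x \<in> tpath par (lca par u v) v \<and>
         (x \<noteq> v \<longrightarrow> x' \<in> tpath par (lca par u v) v \<and> anc par x x' \<and> x \<noteq> x')"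
proof -
  have ex: "\<exists>!y. y \<in> X \<and> (\<forall>z\<in>X. anc par z y)"
    by (rule deepest[OF tree vV]) (use Xne X_def in auto)
  have xX: "x \<in> X \<and> (\<forall>z\<in>X. anc par z x)"
    unfolding x_def using theI'[OF ex] .
  have xv: "anc par x v" and xu: "\<not> anc par x u" using xX X_def by auto
  have xV: "x \<in> V" using anc_V[OF tree vV xv] .
  have ru: "anc par r u" using tree uV unfolding is_tree_def anc_def by blast
  have xr: "x \<noteq> r" using ru xu by blast
  have rv: "anc par r v" using tree vV unfolding is_tree_def anc_def by blast
  define L where "L = {a. anc par a u \<and> anc par a v}"
  have exL: "\<exists>!y. y \<in> L \<and> (\<forall>z\<in>L. anc par z y)"
    by (rule deepest[OF tree vV]) (use ru rv L_def in auto)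
  have lcaeq: "lca par u v = (THE a. a \<in> L \<and> (\<forall>z\<in>L. anc par z a))"
    unfolding lca_def L_def by simp
  have lL: "lca par u v \<in> L \<and> (\<forall>z\<in>L. anc par z (lca par u v))"
    unfolding lcaeq using theI'[OF exL] .
  have lu: "anc par (lca par u v) u" and lv: "anc par (lca par u v) v"
    using lL unfolding L_def by auto
  have lx: "anc par (lca par u v) x"
  proof -
    from anc_chain[OF lv xv] show ?thesis
    proof
      assume "anc par x (lca par u v)"
      then have "anc par x u" using anc_trans lu by metis
      then show ?thesis using xu by blast
    qed
  qed
  have part1: "x \<in> tpath par (lca par u v) v" unfolding tpath_def using lx xv by blast
  have part2: "x' \<in> tpath par (lca par u v) v \<and> anc par x x' \<and> x \<noteq> x'" if xnv: "x \<noteq> v"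
  proof -
    obtain n where n: "(par ^^ n) v = x" using xv unfolding anc_def by blast
    have n0: "n \<noteq> 0" using n xnv by (cases n) auto
    define c where "c = (par ^^ (n - 1)) v"
    have "par c = (par ^^ Suc (n - 1)) v" unfolding c_def by simp
    then have pc: "par c = x" using n n0 by simp
    have cV: "c \<in> V" unfolding c_def using pow_V[OF tree vV] .
    have fix_r: "y = r" if "y \<in> V" "par y = y" for y
    proof -
      have "(par ^^ m) y = y" for m using that by (induction m) auto
      then show ?thesis using tree that unfolding is_tree_def by metis
    qed
    have cr: "c \<noteq> r" using pc xr tree unfolding is_tree_def by auto
    have cv: "anc par c v" unfolding c_def anc_def by blast
    have chc: "child V r par c x \<and> anc par c v" using cV cr pc cv unfolding child_def by blast
    have uniq: "c' = c" if h: "child V r par c' x \<and> anc par c' v" for c'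
    proof -
      have c'V: "c' \<in> V" and pc': "par c' = x" using h unfolding child_def by auto
      from anc_chain[OF cv] h have "anc par c c' \<or> anc par c' c" by blast
      then show ?thesis
      proof
        assume a: "anc par c c'"
        show ?thesis
        proof (rule ccontr)
          assume ne: "c' \<noteq> c"
          then obtain m where m: "(par ^^ m) c' = c" using a unfolding anc_def by blast
          have "m \<noteq> 0" using m ne by (cases m) auto
          have "(par ^^ (m - 1)) x = (par ^^ (m - 1)) (par c')" using pc' by simp
          also have "\<dots> = (par ^^ Suc (m - 1)) c'" by (simp only: funpow_Suc_right comp_apply)
          also have "\<dots> = c" using m \<open>m \<noteq> 0\<close> by simp
          finally have "(par ^^ (m - 1)) x = c" .
          then have "anc par c x" unfolding anc_def by blast
          moreover have "anc par x c" using pc anc_par[of par c] by simp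
          ultimately have "c = x" using anc_antisym[OF tree xV] by blast
          then show False using pc fix_r xV xr by metis
        qed
      next
        assume a: "anc par c' c"
        show ?thesis
        proof (rule ccontr)
          assume ne: "c' \<noteq> c"
          then obtain m where m: "(par ^^ m) c = c'" using a unfolding anc_def by blast
          have "m \<noteq> 0" using m ne by (cases m) auto
          have "(par ^^ (m - 1)) x = (par ^^ (m - 1)) (par c)" using pc by simp
          also have "\<dots> = (par ^^ Suc (m - 1)) c" by (simp only: funpow_Suc_right comp_apply)
          also have "\<dots> = c'" using m \<open>m \<noteq> 0\<close> by simp
          finally have "(par ^^ (m - 1)) x = c'" .
          then have "anc par c' x" unfolding anc_def by blast
          moreover have "anc par x c'" using pc' anc_par[of par c'] by simp
          ultimately have "c' = x" using anc_antisym[OF tree xV] by blast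
          then show False using pc' fix_r xV xr by metis
        qed
      qed
    qed
    have "x' = c" unfolding x'_def x_def[symmetric]
      using chc uniq by (rule the_equality)
    moreover have xc: "anc par x c" using pc anc_par[of par c] by simp
    moreover have "anc par (lca par u v) c" using anc_trans[OF lx xc] .
    moreover have "x \<noteq> c" using pc fix_r cV cr by metis
    ultimately show ?thesis using cv unfolding tpath_def by blast
  qed
  show ?thesis using part1 part2 by blast
qed

end
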